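(* Let $W$ be a discrete memoryless channel with input alphabet $\mathbb{F}_q$ and let $m\ge1$. Then $C_{KV}(W^{\otimes m})=C_{KV}(W)^m$. In particular, if $C_{KV}(W)=1-\epsilon$ then $C_{KV}(W^{\otimes m})\ge1-m\epsilon$.
   Context: For memoryless channels $W$ (input $\mathcal{X}$, output $\mathcal{Y}$) and $W'$ (input $\mathcal{X}'$, output $\mathcal{Y}'$), the tensor product $W\otimes W'$ has input $\mathcal{X}\times\mathcal{X}'$, output $\mathcal{Y}\times\mathcal{Y}'$ and transition probabilities $(W\otimes W')(y,y'|x,x')=W(y|x)W'(y'|x')$; $W^{\otimes m}=W\otimes\cdots\otimes W$ ($m$ factors), with input alphabet $\mathbb{F}_q^m$ (identified with $\mathbb{F}_{q^m}$). For a channel with finite input alphabet $A$ and input uniformly distributed on $A$, the APP vector of output $y$ is $\pi_y=(\mathrm{prob}(\text{input}=a|y))_{a\in A}$ and the Koetter–Vardy capacity is $C_{KV}=\mathbb{E}(\sum_a\pi_y(a)^2)$, the expectation being over the channel output. *)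

theory Defs
  imports "HOL-Probability.Probability"
begin

text \<open>A discrete memoryless channel with input type 'a and output type 'b is a
  map from inputs to (discrete) output distributions: W x is the law of the
  output given input x, i.e. pmf (W x) y = W(y|x).\<close>
type_synonym ('a, 'b) channel = "'a \<Rightarrow> 'b pmf"

definition chan_tensor :: "('a, 'b) channel \<Rightarrow> ('c, 'd) channel \<Rightarrow> ('a \<times> 'c, 'b \<times> 'd) channel" where
  "chan_tensor W W' = (\<lambda>(x, x'). pair_pmf (W x) (W' x'))"

text \<open>m-fold tensor power; inputs and outputs are words (lists) of length m,
  W^{(m+1)} = W \<otimes> W^{(m)} via the first letter and the rest.\<close>
fun chan_pow :: "('a, 'b) channel \<Rightarrow> nat \<Rightarrow> ('a list, 'b list) channel" where
  "chan_pow W 0 = (\<lambda>_. return_pmf [])"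
| "chan_pow W (Suc m) =
     (\<lambda>xs. map_pmf (\<lambda>(y, ys). y # ys) (chan_tensor W (chan_pow W m) (hd xs, tl xs)))"

definition chan_output :: "'a set \<Rightarrow> ('a, 'b) channel \<Rightarrow> 'b pmf" where
  "chan_output A W = bind_pmf (pmf_of_set A) W"

text \<open>APP vector: posterior probability of input a given output y (uniform prior on A).\<close>
definition app_vec :: "'a set \<Rightarrow> ('a, 'b) channel \<Rightarrow> 'b \<Rightarrow> 'a \<Rightarrow> real" where
  "app_vec A W y a = pmf (pmf_of_set A) a * pmf (W a) y / pmf (chan_output A W) y"

definition C_KV :: "'a set \<Rightarrow> ('a, 'b) channel \<Rightarrow> real" where
  "C_KV A W = measure_pmf.expectation (chan_output A W) (\<lambda>y. \<Sum>a\<in>A. (app_vec A W y a)^2)"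

end

theory Submission
  imports Defs
begin

lemma expect_pair_mult:
  fixes f :: "'a \<Rightarrow> real" and g :: "'b \<Rightarrow> real"
  assumes f: "\<And>x. 0 \<le> f x" and g: "\<And>y. 0 \<le> g y"
  shows "measure_pmf.expectation (pair_pmf P Q) (\<lambda>(x,y). f x * g y)
       = measure_pmf.expectation P f * measure_pmf.expectation Q g"
proof -
  have "measure_pmf.expectation (pair_pmf P Q) (\<lambda>(x,y). f x * g y)
      = enn2real (\<integral>\<^sup>+ z. ennreal ((\<lambda>(x,y). f x * g y) z) \<partial>pair_pmf P Q)"
    by (rule integral_eq_nn_integral) (auto simp: f g)
  also have "(\<integral>\<^sup>+ z. ennreal ((\<lambda>(x,y). f x * g y) z) \<partial>pair_pmf P Q)
     = (\<integral>\<^sup>+ a. \<integral>\<^sup>+ b. ennreal (f a) * ennreal (g b) \<partial>Q \<partial>P)"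
    by (simp add: nn_integral_pair_pmf' ennreal_mult f g)
  also have "\<dots> = (\<integral>\<^sup>+ a. ennreal (f a) * (\<integral>\<^sup>+ b. ennreal (g b) \<partial>Q) \<partial>P)"
    by (simp add: nn_integral_cmult)
  also have "\<dots> = (\<integral>\<^sup>+ a. ennreal (f a) \<partial>P) * (\<integral>\<^sup>+ b. ennreal (g b) \<partial>Q)"
    by (simp add: nn_integral_multc)
  finally show ?thesis
    by (simp add: enn2real_mult integral_eq_nn_integral f g)
qed

definition SS :: "'a set \<Rightarrow> ('a, 'b) channel \<Rightarrow> 'b \<Rightarrow> real" where
  "SS A W y = (\<Sum>a\<in>A. pmf (W a) y)"

definition FF :: "'a set \<Rightarrow> ('a, 'b) channel \<Rightarrow> 'b \<Rightarrow> real" where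
  "FF A W y = (\<Sum>a\<in>A. (pmf (W a) y / SS A W y)^2)"

lemma pmf_out: assumes "finite A" "A \<noteq> {}"
  shows "pmf (chan_output A W) y = SS A W y / card A"
  using assms by (simp add: chan_output_def pmf_bind integral_pmf_of_set SS_def)

lemma C_KV_alt: assumes "finite A" "A \<noteq> {}"
  shows "C_KV A W = measure_pmf.expectation (chan_output A W) (FF A W)"
proof -
  have c: "card A > 0" using assms by (simp add: card_gt_0_iff)
  have "app_vec A W y a = pmf (W a) y / SS A W y" if "a \<in> A" for y a
    using that c assms by (simp add: app_vec_def pmf_out[OF assms])
  then show ?thesis unfolding C_KV_def FF_def by simp
qed

lemma FF_nonneg: "0 \<le> FF A W y"
  by (simp add: FF_def sum_nonneg)

lemma pow_cons:
  fixes W :: "('a, 'b) channel"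
  shows "pmf (chan_pow W (Suc m) (x#xs)) (y#ys) = pmf (W x) y * pmf (chan_pow W m xs) ys"
proof -
  have i: "inj (\<lambda>(y::'b, ys). y # ys)" by (auto simp: inj_def)
  show ?thesis
    using pmf_map_inj'[OF i, of "pair_pmf (W x) (chan_pow W m xs)" "(y,ys)"]
    by (simp add: chan_tensor_def pmf_pair)
qed

lemma sum_lists_Suc:
  fixes h :: "'a::finite list \<Rightarrow> real"
  shows "(\<Sum>zs\<in>{xs. length xs = Suc m}. h zs) = (\<Sum>x\<in>UNIV. \<Sum>xs\<in>{xs. length xs = m}. h (x#xs))"
proof -
  have e: "{xs. length xs = Suc m} = (\<lambda>(x, xs). x # xs) ` (UNIV \<times> {xs::'a list. length xs = m})"
    by (auto simp: image_iff length_Suc_conv)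
  have i: "inj_on (\<lambda>(x::'a, xs). x # xs) (UNIV \<times> {xs::'a list. length xs = m})"
    by (auto simp: inj_on_def)
  have f: "finite {xs::'a list. length xs = m}"
    using finite_lists_length_eq[of "UNIV::'a set" m] by simp
  show ?thesis unfolding e sum.reindex[OF i]
    by (simp add: sum.cartesian_product case_prod_unfold)
qed

lemma SS_cons:
  fixes W :: "('a::finite, 'b) channel"
  shows "SS {xs. length xs = Suc m} (chan_pow W (Suc m)) (y # ys)
   = SS UNIV W y * SS {xs. length xs = m} (chan_pow W m) ys"
  unfolding SS_def sum_lists_Suc pow_cons by (simp add: sum_product)

lemma FF_cons:
  fixes W :: "('a::finite, 'b) channel"
  shows
  "FF {xs. length xs = Suc m} (chan_pow W (Suc m)) (y # ys)
   = FF UNIV W y * FF {xs. length xs = m} (chan_pow W m) ys"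
proof -
  have e: "((a * b) / (c * d))^2 = (a / c)^2 * (b / d)^2" for a b c d :: real
    by (metis times_divide_times_eq power_mult_distrib)
  show ?thesis
    unfolding FF_def SS_cons sum_lists_Suc pow_cons e
    by (rule sum_product[symmetric])
qed

lemma out_cons:
  fixes W :: "('a::finite, 'b) channel"
  shows "chan_output {xs. length xs = Suc m} (chan_pow W (Suc m))
   = map_pmf (\<lambda>(y, ys). y # ys) (pair_pmf (chan_output UNIV W) (chan_output {xs. length xs = m} (chan_pow W m)))"
proof (rule pmf_eqI)
  fix zs :: "'b list"
  have fin: "finite {xs::'a list. length xs = n}" for n
    using finite_lists_length_eq[of "UNIV::'a set" n] by simp
  have ne: "{xs::'a list. length xs = n} \<noteq> {}" for n
    by (metis (mono_tags, lifting) empty_iff length_replicate mem_Collect_eq)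
  have card: "card {xs::'a list. length xs = n} = CARD('a) ^ n" for n
    using card_lists_length_eq[of "UNIV::'a set" n] by simp
  have i: "inj (\<lambda>(y::'b, ys). y # ys)" by (auto simp: inj_def)
  show "pmf (chan_output {xs. length xs = Suc m} (chan_pow W (Suc m))) zs =
         pmf (map_pmf (\<lambda>(y, ys). y # ys) (pair_pmf (chan_output UNIV W) (chan_output {xs. length xs = m} (chan_pow W m)))) zs"
  proof (cases zs)
    case Nil
    have z: "pmf (map_pmf (\<lambda>(y::'b, ys). y # ys) M) [] = 0" for M
    proof -
      have "(\<lambda>(y::'b, ys). y # ys) -` {[]} = {}" by auto
      then show ?thesis by (simp add: pmf_map)
    qed
    have "SS {xs. length xs = Suc m} (chan_pow W (Suc m)) [] = 0"
      unfolding SS_def sum_lists_Suc by (simp add: chan_tensor_def z)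
    then show ?thesis using Nil by (simp add: pmf_out[OF fin ne] z)
  next
    case (Cons y ys)
    have "pmf (map_pmf (\<lambda>(y, ys). y # ys) (pair_pmf (chan_output UNIV W) (chan_output {xs. length xs = m} (chan_pow W m)))) zs
       = pmf (chan_output UNIV W) y * pmf (chan_output {xs. length xs = m} (chan_pow W m)) ys"
      using pmf_map_inj'[OF i, of _ "(y,ys)"] Cons by (simp add: pmf_pair)
    then show ?thesis using Cons
      by (simp add: pmf_out[OF fin ne] pmf_out card SS_cons del: chan_pow.simps)
  qed
qed

lemma pow_C:
  fixes W :: "('a::finite, 'b) channel"
  shows "C_KV {xs. length xs = m} (chan_pow W m) = C_KV UNIV W ^ m"
proof (induction m)
  case 0
  have e: "{xs::'a list. length xs = 0} = {[]}" by auto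
  show ?case unfolding e C_KV_def chan_output_def app_vec_def by simp
next
  case (Suc m)
  have fin: "finite {xs::'a list. length xs = n}" for n
    using finite_lists_length_eq[of "UNIV::'a set" n] by simp
  have ne: "{xs::'a list. length xs = n} \<noteq> {}" for n
    by (metis (mono_tags, lifting) empty_iff length_replicate mem_Collect_eq)
  have "C_KV {xs. length xs = Suc m} (chan_pow W (Suc m))
     = measure_pmf.expectation (pair_pmf (chan_output UNIV W) (chan_output {xs. length xs = m} (chan_pow W m)))
         (\<lambda>(y, ys). FF UNIV W y * FF {xs. length xs = m} (chan_pow W m) ys)"
    unfolding C_KV_alt[OF fin ne] out_cons integral_map_pmf
    by (rule Bochner_Integration.integral_cong) (auto simp: FF_cons simp del: chan_pow.simps)
  also have "\<dots> = C_KV UNIV W * C_KV {xs. length xs = m} (chan_pow W m)"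
    by (simp add: expect_pair_mult FF_nonneg C_KV_alt[OF fin ne] C_KV_alt del: chan_pow.simps)
  finally show ?case using Suc.IH by simp
qed

theorem proposition5:
  fixes W :: "('a :: {finite, field}, 'b) channel" and m :: nat
  assumes "m \<ge> 1"
  shows "C_KV {xs. length xs = m} (chan_pow W m) = C_KV UNIV W ^ m
         \<and> (\<forall>\<epsilon>::real. C_KV UNIV W = 1 - \<epsilon> \<longrightarrow>
              C_KV {xs. length xs = m} (chan_pow W m) \<ge> 1 - real m * \<epsilon>)"
proof -
  have nn: "0 \<le> C_KV UNIV W"
    unfolding C_KV_def by (rule integral_nonneg_AE) (simp add: sum_nonneg)
  show ?thesis
  proof (intro conjI allI impI)
    show "C_KV {xs. length xs = m} (chan_pow W m) = C_KV UNIV W ^ m" by (rule pow_C)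
    fix \<epsilon> :: real
    assume h: "C_KV UNIV W = 1 - \<epsilon>"
    have "-1 \<le> - \<epsilon>" using nn h by simp
    from Bernoulli_inequality[OF this, of m]
    show "C_KV {xs. length xs = m} (chan_pow W m) \<ge> 1 - real m * \<epsilon>"
      using h pow_C[of m W] by simp
  qed
qed

end
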